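(* Let $p$ be an odd prime and $A\subseteq \mathbb{F}_p$. Then \[ \left| T(A) - \left( \frac{|A|^6}{p} + 2 |A|^4 \right) \right| \leq p\, |A|^3. \]
   Context: $\mathbb{F}_p$ is the field with $p$ elements. A line means an affine line in $\mathbb{F}_p^2$. For a line $\ell$, $i(\ell)$ denotes the number of points of $A\times A$ lying on $\ell$, and $T(A)=\sum_{\text{all lines } \ell} i(\ell)^3$ is the number of collinear triples in $A\times A$. *)

theory Defs
  imports Complex_Main "HOL-Library.Cardinality" "HOL-Computational_Algebra.Primes"
begin

text \<open>The field F_p is modelled by a finite field type 'a with CARD('a) = p prime.
  An affine line in 'a^2 is the point set {(x,y). a*x + b*y = c} with (a,b) \<noteq> (0,0);
  lines are identified as point sets, so each line is counted once.\<close>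

definition affine_lines :: "('a::field \<times> 'a) set set" where
  "affine_lines = {{v. a * fst v + b * snd v = c} | a b c. (a, b) \<noteq> (0, 0)}"

definition incid :: "'a::field set \<Rightarrow> ('a \<times> 'a) set \<Rightarrow> nat" where
  "incid A l = card (l \<inter> (A \<times> A))"

definition collinear_triples :: "'a::{field,finite} set \<Rightarrow> nat" where
  "collinear_triples A = (\<Sum>l\<in>affine_lines. incid A l ^ 3)"

end

theory Submission
  imports Defs
begin

definition nvl :: "('a::field \<times> 'a) \<Rightarrow> ('a \<times> 'a) set" where
  "nvl w = {v. snd v = fst w * fst v + snd w}"

definition vvl :: "'a::field \<Rightarrow> ('a \<times> 'a) set" where
  "vvl c = {v. fst v = c}"

lemma lines_eq: "(affine_lines :: ('a::field \<times> 'a) set set) = range nvl \<union> range vvl"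
proof (rule set_eqI, rule iffI)
  fix l :: "('a \<times> 'a) set"
  assume "l \<in> affine_lines"
  then obtain a b c where l: "l = {v. a * fst v + b * snd v = c}" and ab: "(a,b) \<noteq> (0,0)"
    unfolding affine_lines_def by blast
  show "l \<in> range nvl \<union> range vvl"
  proof (cases "b = 0")
    case True
    then have "a \<noteq> 0" using ab by simp
    then have "l = vvl (c / a)" unfolding l vvl_def using True
      by (auto simp: field_simps)
    then show ?thesis by blast
  next
    case False
    then have "l = nvl (-a/b, c/b)" unfolding l nvl_def
      by (auto simp: field_simps)
    then show ?thesis by blast
  qed
next
  fix l :: "('a \<times> 'a) set"
  assume "l \<in> range nvl \<union> range vvl"
  then show "l \<in> affine_lines"
  proof
    assume "l \<in> range nvl"
    then obtain m c where "l = nvl (m,c)" by auto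
    then have "l = {v. (-m) * fst v + 1 * snd v = c}" unfolding nvl_def
      by (auto simp: algebra_simps)
    then show ?thesis unfolding affine_lines_def
      by (intro CollectI exI[where x="-m"] exI[where x=1] exI[where x=c]) simp
  next
    assume "l \<in> range vvl"
    then obtain c where "l = vvl c" by auto
    then have "l = {v. 1 * fst v + 0 * snd v = c}" unfolding vvl_def by auto
    then show ?thesis unfolding affine_lines_def
      by (intro CollectI exI[where x=1] exI[where x=0] exI[where x=c]) simp
  qed
qed

lemma inj_nvl: "inj (nvl :: ('a::field \<times> 'a) \<Rightarrow> _)"
proof (rule injI)
  fix w w' :: "'a \<times> 'a"
  assume h: "nvl w = nvl w'"
  have "(0, snd w) \<in> nvl w" unfolding nvl_def by simp
  then have "(0, snd w) \<in> nvl w'" using h by simp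
  then have c: "snd w = snd w'" unfolding nvl_def by simp
  have "(1, fst w + snd w) \<in> nvl w" unfolding nvl_def by simp
  then have "(1, fst w + snd w) \<in> nvl w'" using h by simp
  then have "fst w = fst w'" using c unfolding nvl_def by simp
  then show "w = w'" using c by (simp add: prod_eq_iff)
qed

lemma inj_vvl: "inj (vvl :: 'a::field \<Rightarrow> _)"
proof (rule injI)
  fix c c' :: 'a
  assume h: "vvl c = vvl c'"
  have "(c, 0) \<in> vvl c" unfolding vvl_def by simp
  then show "c = c'" using h unfolding vvl_def by simp
qed

lemma disj_lines: "range nvl \<inter> range (vvl :: 'a::field \<Rightarrow> _) = {}"
proof (rule ccontr)
  assume "range nvl \<inter> range (vvl :: 'a::field \<Rightarrow> _) \<noteq> {}"
  then obtain w c where h: "nvl w = vvl (c::'a)" by auto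
  have "(c, 0) \<in> vvl c" "(c, 1) \<in> vvl c" unfolding vvl_def by auto
  then have "(c, 0) \<in> nvl w" "(c, 1) \<in> nvl w" using h by auto
  then show False unfolding nvl_def by simp
qed

definition II :: "'a::field set \<Rightarrow> 'a \<times> 'a \<Rightarrow> nat" where
  "II A w = card {x\<in>A. fst w * x + snd w \<in> A}"

lemma incid_nvl:
  fixes A :: "'a::{field,finite} set"
  shows "incid A (nvl w) = II A w"
proof -
  have "nvl w \<inter> A \<times> A = (\<lambda>x. (x, fst w * x + snd w)) ` {x\<in>A. fst w * x + snd w \<in> A}"
    unfolding nvl_def by auto
  moreover have "inj_on (\<lambda>x. (x, fst w * x + snd w)) X" for X
    by (rule inj_onI) simp
  ultimately show ?thesis unfolding incid_def II_def by (simp add: card_image)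
qed

lemma incid_vvl:
  fixes A :: "'a::{field,finite} set"
  shows "incid A (vvl c) = (if c \<in> A then card A else 0)"
proof -
  have "vvl c \<inter> A \<times> A = (if c \<in> A then {c} \<times> A else {})"
    unfolding vvl_def by auto
  then show ?thesis unfolding incid_def by (simp add: card_cartesian_product_singleton)
qed

lemma T_split:
  fixes A :: "'a::{field,finite} set"
  shows "collinear_triples A = (\<Sum>w\<in>UNIV. II A w ^ 3) + card A ^ 4"
proof -
  have "collinear_triples A = (\<Sum>l\<in>range nvl. incid A l ^ 3) + (\<Sum>l\<in>range vvl. incid A l ^ 3)"
    unfolding collinear_triples_def lines_eq
    by (rule sum.union_disjoint) (auto simp: disj_lines)
  also have "(\<Sum>l\<in>range nvl. incid A l ^ 3) = (\<Sum>w\<in>UNIV. II A w ^ 3)"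
    by (simp add: sum.reindex[OF inj_nvl] incid_nvl)
  also have "(\<Sum>l\<in>range vvl. incid A l ^ 3) = (\<Sum>c\<in>UNIV. (if c \<in> A then card A else 0) ^ 3)"
    by (simp add: sum.reindex[OF inj_vvl] incid_vvl)
  also have "\<dots> = (\<Sum>c\<in>A. card A ^ 3)"
  proof -
    have "(\<Sum>c\<in>UNIV. (if c \<in> A then card A else 0) ^ 3) = (\<Sum>c\<in>UNIV. if c \<in> A then card A ^ 3 else 0)"
      by (rule sum.cong) auto
    also have "\<dots> = (\<Sum>c\<in>A. card A ^ 3)" by (simp add: sum.If_cases)
    finally show ?thesis .
  qed
  also have "\<dots> = card A ^ 4" by (simp add: power_eq_if)
  finally show ?thesis .
qed


lemma card_filter_sum: "finite A \<Longrightarrow> card {x\<in>A. P x} = (\<Sum>x\<in>A. if P x then 1 else 0)"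
  by (simp add: sum.inter_filter[symmetric])

lemma card_UNIV_filter: "card {x::'b::finite. P x} = (\<Sum>x\<in>UNIV. if P x then 1 else 0)"
  using card_filter_sum[of UNIV P] by simp

lemma card_filter_fin: "card {x\<in>(A::'b::finite set). P x} = (\<Sum>x\<in>A. if P x then 1 else 0)"
  using card_filter_sum[of A P] by simp

lemma if_mult01: "(if P then 1 else 0) * (if Q then 1 else 0) = (if P \<and> Q then 1 else (0::nat))"
  by simp

lemma card_one:
  fixes A :: "'a::{field,finite} set"
  shows "card {w::'a\<times>'a. fst w * x + snd w \<in> A} = CARD('a) * card A"
proof -
  let ?g = "\<lambda>z::'a\<times>'a. (fst z, snd z - fst z * x)"
  have e: "{w::'a\<times>'a. fst w * x + snd w \<in> A} = ?g ` (UNIV \<times> A)"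
  proof (rule set_eqI, rule iffI)
    fix w :: "'a \<times> 'a"
    assume "w \<in> {w. fst w * x + snd w \<in> A}"
    then have "(fst w, fst w * x + snd w) \<in> UNIV \<times> A" by simp
    moreover have "w = ?g (fst w, fst w * x + snd w)" by simp
    ultimately show "w \<in> ?g ` (UNIV \<times> A)" by (rule rev_image_eqI)
  next
    fix w :: "'a \<times> 'a"
    assume "w \<in> ?g ` (UNIV \<times> A)"
    then obtain z where "z \<in> UNIV \<times> A" "w = ?g z" by blast
    then show "w \<in> {w. fst w * x + snd w \<in> A}" by (simp add: mem_Times_iff)
  qed
  have i: "inj_on ?g (UNIV \<times> A)"
  proof (rule inj_onI)
    fix u v :: "'a \<times> 'a" assume "?g u = ?g v"
    then have ab: "fst u = fst v \<and> snd u - fst u * x = snd v - fst v * x" by (metis fst_conv snd_conv)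
    then have a: "fst u = fst v" and b: "snd u - fst u * x = snd v - fst v * x" by blast+
    then have "snd u = snd v" by (metis diff_add_cancel)
    then show "u = v" using a by (simp add: prod_eq_iff)
  qed
  show ?thesis unfolding e using card_image[OF i] by (simp add: card_cartesian_product)
qed

lemma card_two:
  fixes A :: "'a::{field,finite} set"
  assumes "x \<noteq> y"
  shows "card {w::'a\<times>'a. fst w * x + snd w \<in> A \<and> fst w * y + snd w \<in> A} = card A * card A"
proof -
  let ?f = "\<lambda>w::'a\<times>'a. (fst w * x + snd w, fst w * y + snd w)"
  let ?S = "{w::'a\<times>'a. fst w * x + snd w \<in> A \<and> fst w * y + snd w \<in> A}"
  have d: "x - y \<noteq> 0" using assms by simp
  have inj: "inj_on ?f ?S"
  proof (rule inj_onI)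
    fix u v :: "'a \<times> 'a"
    assume h: "?f u = ?f v"
    then have e1: "fst u * x + snd u = fst v * x + snd v" and e2: "fst u * y + snd u = fst v * y + snd v"
      by (metis fst_conv snd_conv)+
    have "(fst u - fst v) * (x - y) = ((fst u * x + snd u) - (fst u * y + snd u)) - ((fst v * x + snd v) - (fst v * y + snd v))"
      by (simp add: algebra_simps)
    also have "\<dots> = 0" using e1 e2 by simp
    finally have "(fst u - fst v) * (x - y) = 0" .
    then have a: "fst u = fst v" using d by simp
    have "snd u = (fst u * x + snd u) - fst u * x" by simp
    also have "\<dots> = (fst v * x + snd v) - fst v * x" using e1 a by simp
    also have "\<dots> = snd v" by simp
    finally show "u = v" using a by (simp add: prod_eq_iff)
  qed
  have im: "?f ` ?S = A \<times> A"
  proof (rule set_eqI, rule iffI)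
    fix z :: "'a \<times> 'a" assume "z \<in> ?f ` ?S"
    then obtain w where "w \<in> ?S" "z = ?f w" by blast
    then show "z \<in> A \<times> A" by simp
  next
    fix z :: "'a \<times> 'a" assume z: "z \<in> A \<times> A"
    define m where "m = (fst z - snd z) / (x - y)"
    define c where "c = fst z - m * x"
    have m: "m * (x - y) = fst z - snd z" unfolding m_def using d by simp
    have 1: "m * x + c = fst z" unfolding c_def by simp
    have "m * y + c = m * y + fst z - m * x" unfolding c_def by (simp add: algebra_simps)
    also have "\<dots> = fst z - m * (x - y)" by (simp add: algebra_simps)
    also have "\<dots> = snd z" using m by simp
    finally have 2: "m * y + c = snd z" .
    have "(m, c) \<in> ?S" using z 1 2 by (simp add: mem_Times_iff)
    moreover have "z = ?f (m, c)" using 1 2 by (simp add: prod_eq_iff)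
    ultimately show "z \<in> ?f ` ?S" by (rule rev_image_eqI)
  qed
  show ?thesis using card_image[OF inj] unfolding im by (simp add: card_cartesian_product)
qed

lemma M1:
  fixes A :: "'a::{field,finite} set"
  shows "(\<Sum>w\<in>UNIV. II A w) = CARD('a) * card A * card A"
proof -
  have "(\<Sum>w\<in>UNIV. II A w) = (\<Sum>w\<in>(UNIV::('a\<times>'a) set). \<Sum>x\<in>A. if fst w * x + snd w \<in> A then 1 else 0)"
    unfolding II_def by (simp add: card_filter_sum)
  also have "\<dots> = (\<Sum>x\<in>A. \<Sum>w\<in>(UNIV::('a\<times>'a) set). if fst w * x + snd w \<in> A then 1 else 0)"
    by (rule sum.swap)
  also have "\<dots> = (\<Sum>x\<in>A. CARD('a) * card A)"
  proof (rule sum.cong[OF refl])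
    fix x assume "x \<in> A"
    show "(\<Sum>w\<in>(UNIV::('a\<times>'a) set). if fst w * x + snd w \<in> A then 1 else 0) = CARD('a) * card A"
      using card_one[of x A] card_UNIV_filter[of "\<lambda>w::'a\<times>'a. fst w * x + snd w \<in> A"] by simp
  qed
  finally show ?thesis by (simp only: sum_constant of_nat_id mult.assoc mult.commute)
qed

lemma M2:
  fixes A :: "'a::{field,finite} set"
  shows "(\<Sum>w\<in>UNIV. II A w ^ 2) = card A * (CARD('a) * card A + (card A - 1) * (card A * card A))"
proof -
  let ?P = "\<lambda>w x. fst w * x + snd w \<in> (A::'a set)"
  have "(\<Sum>w\<in>UNIV. II A w ^ 2) = (\<Sum>w\<in>(UNIV::('a\<times>'a) set). \<Sum>x\<in>A. \<Sum>y\<in>A. if ?P w x \<and> ?P w y then 1 else 0)"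
    unfolding II_def power2_eq_square by (simp only: card_filter_fin sum_product if_mult01)
  also have "\<dots> = (\<Sum>x\<in>A. \<Sum>w\<in>(UNIV::('a\<times>'a) set). \<Sum>y\<in>A. if ?P w x \<and> ?P w y then 1 else 0)"
    by (rule sum.swap)
  also have "\<dots> = (\<Sum>x\<in>A. \<Sum>y\<in>A. \<Sum>w\<in>(UNIV::('a\<times>'a) set). if ?P w x \<and> ?P w y then 1 else 0)"
    by (rule sum.cong, simp, rule sum.swap)
  also have "\<dots> = (\<Sum>x\<in>A. \<Sum>y\<in>A. if x = y then CARD('a) * card A else card A * card A)"
  proof (intro sum.cong refl)
    fix x y assume "x \<in> A" "y \<in> A"
    show "(\<Sum>w\<in>(UNIV::('a\<times>'a) set). if ?P w x \<and> ?P w y then 1 else 0) = (if x = y then CARD('a) * card A else card A * card A)"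
    proof (cases "x = y")
      case True then show ?thesis
        using card_one[of x A] card_UNIV_filter[of "\<lambda>w::'a\<times>'a. fst w * x + snd w \<in> A"] by simp
    next
      case False then show ?thesis using card_two[OF False, of A]
        card_UNIV_filter[of "\<lambda>w::'a\<times>'a. fst w * x + snd w \<in> A \<and> fst w * y + snd w \<in> A"] by simp
    qed
  qed
  also have "\<dots> = (\<Sum>x\<in>A. CARD('a) * card A + (card A - 1) * (card A * card A))"
  proof (rule sum.cong[OF refl])
    fix x assume x: "x \<in> A"
    have "(\<Sum>y\<in>A. if x = y then CARD('a) * card A else card A * card A)
       = (if x = x then CARD('a) * card A else card A * card A) + (\<Sum>y\<in>A - {x}. if x = y then CARD('a) * card A else card A * card A)"
      by (rule sum.remove[OF finite x])
    also have "(\<Sum>y\<in>A - {x}. if x = y then CARD('a) * card A else card A * card A) = (\<Sum>y\<in>A - {x}. card A * card A)"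
      by (rule sum.cong) auto
    finally show "(\<Sum>y\<in>A. if x = y then CARD('a) * card A else card A * card A) = CARD('a) * card A + (card A - 1) * (card A * card A)"
      using x by (simp add: card_Diff_singleton)
  qed
  finally show ?thesis by (simp only: sum_constant of_nat_id)
qed

lemma II_le: "II A w \<le> card (A::'a::{field,finite} set)"
  unfolding II_def by (rule card_mono) auto


lemma real_M2:
  fixes A :: "'a::{field,finite} set"
  shows "(\<Sum>w\<in>UNIV. real (II A w) ^ 2) = real CARD('a) * real (card A) ^ 2 + real (card A) ^ 4 - real (card A) ^ 3"
proof -
  have "(\<Sum>w\<in>UNIV. real (II A w) ^ 2) = real (\<Sum>w\<in>UNIV. II A w ^ 2)" by simp
  also have "\<dots> = real (card A * (CARD('a) * card A + (card A - 1) * (card A * card A)))" by (simp only: M2)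
  also have "\<dots> = real CARD('a) * real (card A) ^ 2 + real (card A) ^ 4 - real (card A) ^ 3"
  proof (cases "card A = 0")
    case True then show ?thesis by simp
  next
    case False
    then have h: "1 \<le> card A" by linarith
    have e: "real (card A - 1) = real (card A) - 1" using of_nat_diff[OF h] by simp
    have "real (card A * (CARD('a) * card A + (card A - 1) * (card A * card A)))
       = real (card A) * (real CARD('a) * real (card A) + real (card A - 1) * (real (card A) * real (card A)))"
      by (simp only: of_nat_mult of_nat_add)
    also have "\<dots> = real (card A) * (real CARD('a) * real (card A) + (real (card A) - 1) * (real (card A) * real (card A)))"
      by (simp only: e)
    also have "\<dots> = real CARD('a) * real (card A) ^ 2 + real (card A) ^ 4 - real (card A) ^ 3"
      by (simp add: algebra_simps power2_eq_square power3_eq_cube power4_eq_xxxx)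
    finally show ?thesis .
  qed
  finally show ?thesis .
qed

theorem mainTheorem3:
  fixes A :: "'a::{field,finite} set"
  assumes "prime (CARD('a))" and "odd (CARD('a))"
  shows "\<bar>real (collinear_triples A) - (real (card A) ^ 6 / real CARD('a) + 2 * real (card A) ^ 4)\<bar>
           \<le> real CARD('a) * real (card A) ^ 3"
proof -
  define n where "n = real (card A)"
  define q where "q = real CARD('a)"
  define a where "a = n^2 / q"
  define X where "X w = real (II A w)" for w :: "'a \<times> 'a"
  define S3 where "S3 = (\<Sum>w\<in>UNIV. X w ^ 3)"
  have q0: "q > 0" unfolding q_def by simp
  have n0: "n \<ge> 0" unfolding n_def by simp
  have nq: "n \<le> q" unfolding n_def q_def by (simp add: card_mono)
  have S0: "real (card (UNIV :: ('a \<times> 'a) set)) = q^2"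
    unfolding q_def by (simp add: UNIV_Times_UNIV[symmetric] card_cartesian_product power2_eq_square del: UNIV_Times_UNIV)
  have S1: "(\<Sum>w\<in>UNIV. X w) = q * n^2"
  proof -
    have "(\<Sum>w\<in>UNIV. X w) = real (\<Sum>w\<in>UNIV. II A w)" unfolding X_def by simp
    also have "\<dots> = q * n^2" unfolding q_def n_def by (simp only: M1) (simp add: power2_eq_square)
    finally show ?thesis .
  qed
  have S2: "(\<Sum>w\<in>UNIV. X w ^ 2) = q * n^2 + n^4 - n^3"
    unfolding X_def q_def n_def by (rule real_M2)
  have T: "real (collinear_triples A) = S3 + n^4"
    unfolding S3_def X_def n_def T_split by simp
  have Xb: "0 \<le> X w" "X w \<le> n" for w unfolding X_def n_def by (simp_all add: II_le)
  have U: "(\<Sum>w\<in>UNIV. (X w - a)^2 * (X w - n)) \<le> 0"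
    by (rule sum_nonpos) (simp add: mult_nonneg_nonpos Xb)
  have L: "(\<Sum>w\<in>UNIV. (X w - a)^2 * X w) \<ge> 0"
    by (rule sum_nonneg) (simp add: Xb)
  have eU: "(\<Sum>w\<in>UNIV. (X w - a)^2 * (X w - n)) =
      S3 - (2*a+n) * (\<Sum>w\<in>UNIV. X w ^ 2) + (a^2 + 2*a*n) * (\<Sum>w\<in>UNIV. X w) - a^2 * n * real (card (UNIV :: ('a \<times> 'a) set))"
  proof -
    have "(\<Sum>w\<in>UNIV. (X w - a)^2 * (X w - n)) = (\<Sum>w\<in>UNIV. X w ^ 3 - (2*a+n) * X w ^ 2 + (a^2 + 2*a*n) * X w - a^2 * n)"
      by (rule sum.cong) (simp_all add: power2_eq_square power3_eq_cube algebra_simps)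
    also have "\<dots> = S3 - (2*a+n) * (\<Sum>w\<in>UNIV. X w ^ 2) + (a^2 + 2*a*n) * (\<Sum>w\<in>UNIV. X w) - a^2 * n * real (card (UNIV :: ('a \<times> 'a) set))"
      unfolding S3_def by (simp add: sum.distrib sum_subtractf sum_distrib_left)
    finally show ?thesis .
  qed
  have eL: "(\<Sum>w\<in>UNIV. (X w - a)^2 * X w) = S3 - 2*a * (\<Sum>w\<in>UNIV. X w ^ 2) + a^2 * (\<Sum>w\<in>UNIV. X w)"
  proof -
    have "(\<Sum>w\<in>UNIV. (X w - a)^2 * X w) = (\<Sum>w\<in>UNIV. X w ^ 3 - 2*a * X w ^ 2 + a^2 * X w)"
      by (rule sum.cong) (simp_all add: power2_eq_square power3_eq_cube algebra_simps)
    also have "\<dots> = S3 - 2*a * (\<Sum>w\<in>UNIV. X w ^ 2) + a^2 * (\<Sum>w\<in>UNIV. X w)"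
      unfolding S3_def by (simp add: sum.distrib sum_subtractf sum_distrib_left)
    finally show ?thesis .
  qed
  have cU: "(2*a+n) * (q * n^2 + n^4 - n^3) - (a^2 + 2*a*n) * (q * n^2) + a^2 * n * q^2
      = n^4 + n^6/q - 2*n^5/q + q*n^3"
    unfolding a_def using q0 by (simp add: field_simps power2_eq_square power3_eq_cube power4_eq_xxxx) (simp add: algebra_simps eval_nat_numeral)
  have cL: "2*a * (q * n^2 + n^4 - n^3) - a^2 * (q * n^2) = 2*n^4 + n^6/q - 2*n^5/q"
    unfolding a_def using q0 by (simp add: field_simps power2_eq_square power3_eq_cube power4_eq_xxxx) (simp add: algebra_simps eval_nat_numeral)
  have up: "S3 \<le> n^4 + n^6/q - 2*n^5/q + q*n^3"
    using U cU unfolding eU S0 S1 S2 by linarith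
  have lo: "S3 \<ge> 2*n^4 + n^6/q - 2*n^5/q"
    using L cL unfolding eL S1 S2 by linarith
  have p1: "n^5/q \<ge> 0" using q0 n0 by simp
  have p2: "n^5/q \<le> n^4"
  proof -
    have "n * n^4 \<le> q * n^4" using nq n0 by (simp add: mult_right_mono)
    moreover have "n^5 = n * n^4" by (simp add: eval_nat_numeral)
    ultimately have "n^5 \<le> q * n^4" by simp
    then show ?thesis using q0 by (simp add: divide_le_eq mult.commute)
  qed
  have p3: "n^4 \<le> q * n^3" using nq n0 by (simp add: power_Suc mult_right_mono eval_nat_numeral)
  show ?thesis unfolding T n_def[symmetric] q_def[symmetric]
    using up lo p1 p2 p3 by (simp add: abs_le_iff)
qed

end
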